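(* For every Zygmund vector field $X$ on $\mathbb{S}^1$, its width satisfies $w(X)\le\frac83\lVert X\rVert_{cr}$.
   Context: A vector field $X$ on $\mathbb{S}^1=\partial\mathbb{D}^2$ is written $X(z)=iz\phi_X(z)$, $\phi_X:\mathbb{S}^1\to\mathbb{R}$. For $\eta\in\overline{\mathbb{D}^2}$, $\phi_X^-(\eta)=\sup\{a(\eta):a:\mathbb{R}^2\to\mathbb{R}\text{ affine},a|_{\mathbb{S}^1}\le\phi_X\}$ and $\phi_X^+(\eta)=\inf\{a(\eta):a\text{ affine},a|_{\mathbb{S}^1}\ge\phi_X\}$. The width is $w(X)=\sup_{\eta\in\mathbb{D}^2}\frac{\phi_X^+(\eta)-\phi_X^-(\eta)}{\sqrt{1-|\eta|^2}}$. Cross-ratio norm: identify $\mathbb{S}^1$ with $\mathbb{RP}^1=\mathbb{R}\cup\{\infty\}$ by a projective identification and write $X$ as $X(x)\partial_x$; for $Q=[a,b,c,d]$, $\mathrm{cr}(Q)=\frac{(b-a)(d-c)}{(c-b)(d-a)}$, $X[Q]=\frac{X(b)-X(a)}{b-a}-\frac{X(c)-X(b)}{c-b}+\frac{X(d)-X(c)}{d-c}-\frac{X(a)-X(d)}{a-d}$, and $\lVert X\rVert_{cr}=\sup_{\mathrm{cr}(Q)=1}|X[Q]|$. $X$ is Zygmund if it is continuous and $\lVert X\rVert_{cr}<\infty$. *)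

theory Defs
  imports "HOL-Analysis.Analysis"
begin

text \<open>A vector field X on the unit circle (boundary of the unit disc in the complex
plane) is X(z) = i z phi(z); we represent it by phi :: complex => real (only its
values on sphere 0 1 matter).\<close>

definition phi_minus :: "(complex \<Rightarrow> real) \<Rightarrow> complex \<Rightarrow> real" where
  "phi_minus \<phi> \<eta> = Sup {c + p * Re \<eta> + q * Im \<eta> | c p q.
      \<forall>z\<in>sphere 0 1. c + p * Re z + q * Im z \<le> \<phi> z}"

definition phi_plus :: "(complex \<Rightarrow> real) \<Rightarrow> complex \<Rightarrow> real" where
  "phi_plus \<phi> \<eta> = Inf {c + p * Re \<eta> + q * Im \<eta> | c p q.
      \<forall>z\<in>sphere 0 1. c + p * Re z + q * Im z \<ge> \<phi> z}"

definition width :: "(complex \<Rightarrow> real) \<Rightarrow> ereal" where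
  "width \<phi> = (SUP \<eta>\<in>ball 0 1.
      ereal ((phi_plus \<phi> \<eta> - phi_minus \<phi> \<eta>) / sqrt (1 - (cmod \<eta>)\<^sup>2)))"

text \<open>Projective identification RP^1 = R \<union> {\<infinity>} -> S^1 via the Cayley transform
x |-> (1 + i x)/(1 - i x) = exp(2 i arctan x). In this chart the vector field
X(z) = i z phi(z) d/dz becomes X(x) d/dx with X(x) = (1 + x^2)/2 * phi(cayley x).\<close>

definition cayley :: "real \<Rightarrow> complex" where
  "cayley x = (1 + \<i> * of_real x) / (1 - \<i> * of_real x)"

definition chart_field :: "(complex \<Rightarrow> real) \<Rightarrow> real \<Rightarrow> real" where
  "chart_field \<phi> x = (1 + x\<^sup>2) / 2 * \<phi> (cayley x)"

definition cross_ratio :: "real \<Rightarrow> real \<Rightarrow> real \<Rightarrow> real \<Rightarrow> real" where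
  "cross_ratio a b c d = ((b - a) * (d - c)) / ((c - b) * (d - a))"

definition field_cr :: "(real \<Rightarrow> real) \<Rightarrow> real \<Rightarrow> real \<Rightarrow> real \<Rightarrow> real \<Rightarrow> real" where
  "field_cr X a b c d =
     (X b - X a) / (b - a) - (X c - X b) / (c - b) + (X d - X c) / (d - c)
     - (X a - X d) / (a - d)"

definition cr_norm :: "(complex \<Rightarrow> real) \<Rightarrow> ereal" where
  "cr_norm \<phi> = (SUP Q\<in>{(a, b, c, d). cross_ratio a b c d = 1}.
      (case Q of (a, b, c, d) \<Rightarrow> ereal \<bar>field_cr (chart_field \<phi>) a b c d\<bar>))"

definition zygmund :: "(complex \<Rightarrow> real) \<Rightarrow> bool" where
  "zygmund \<phi> \<longleftrightarrow> continuous_on (sphere 0 1) \<phi> \<and> cr_norm \<phi> < \<infinity>"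

end

theory Submission
  imports Defs
begin


lemma frac_aux:
  fixes a b c x :: real
  assumes "c \<noteq> 0"
  shows "a/c - b/c*x = (a - b*x)/c" "a/c + b/c*x = (a + b*x)/c"
  using assms by (simp_all add: field_simps)

lemma cayley_eq: "cayley x = Complex ((1 - x\<^sup>2)/(1 + x\<^sup>2)) (2*x/(1 + x\<^sup>2))"
proof -
  have nz: "1 - \<i> * of_real x \<noteq> 0" by (simp add: complex_eq_iff)
  have d: "1 + x\<^sup>2 \<noteq> 0" by (metis add_pos_nonneg zero_less_one zero_le_power2 less_irrefl)
  have c1: "cayley x * (1 - \<i> * of_real x) = 1 + \<i> * of_real x" unfolding cayley_def by (simp only: divide_inverse mult.assoc left_inverse[OF nz] mult_1_right)
  have r1: "(1 - x\<^sup>2)/(1 + x\<^sup>2) + 2*x/(1 + x\<^sup>2)*x = 1"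
  proof -
    have "(1 - x\<^sup>2)/(1 + x\<^sup>2) + 2*x/(1 + x\<^sup>2)*x = ((1 - x\<^sup>2) + 2*x*x)/(1 + x\<^sup>2)"
      using d by (rule frac_aux(2))
    also have "(1 - x\<^sup>2) + 2*x*x = 1 + x\<^sup>2" by (simp add: power2_eq_square)
    finally show ?thesis using d by simp
  qed
  have r2: "2*x/(1 + x\<^sup>2) - (1 - x\<^sup>2)/(1 + x\<^sup>2)*x = x"
  proof -
    have "2*x/(1 + x\<^sup>2) - (1 - x\<^sup>2)/(1 + x\<^sup>2)*x = (2*x - (1 - x\<^sup>2)*x)/(1 + x\<^sup>2)"
      using d by (rule frac_aux)
    also have "2*x - (1 - x\<^sup>2)*x = x * (1 + x\<^sup>2)" by (simp add: algebra_simps power2_eq_square)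
    finally show ?thesis using d by simp
  qed
  have c2: "Complex ((1 - x\<^sup>2)/(1 + x\<^sup>2)) (2*x/(1 + x\<^sup>2)) * (1 - \<i> * of_real x) = 1 + \<i> * of_real x"
  proof (rule complex_eqI)
    show "Re (Complex ((1 - x\<^sup>2)/(1 + x\<^sup>2)) (2*x/(1 + x\<^sup>2)) * (1 - \<i> * of_real x)) = Re (1 + \<i> * of_real x)"
      using r1 by simp
    show "Im (Complex ((1 - x\<^sup>2)/(1 + x\<^sup>2)) (2*x/(1 + x\<^sup>2)) * (1 - \<i> * of_real x)) = Im (1 + \<i> * of_real x)"
      using r2 by simp
  qed
  from c1 c2 nz show ?thesis by (metis mult_right_cancel)
qed

lemma cayley_Re: "Re (cayley x) = (1 - x\<^sup>2)/(1 + x\<^sup>2)" by (simp add: cayley_eq)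
lemma cayley_Im: "Im (cayley x) = 2*x/(1 + x\<^sup>2)" by (simp add: cayley_eq)

lemma cayley_sphere: "cayley x \<in> sphere 0 1"
proof -
  have d: "1 + x\<^sup>2 > 0" by (metis add_pos_nonneg zero_less_one zero_le_power2 less_irrefl)
  have e: "(1 - x\<^sup>2)\<^sup>2 + (2*x)\<^sup>2 = (1 + x\<^sup>2)\<^sup>2" by algebra
  have "(Re (cayley x))\<^sup>2 + (Im (cayley x))\<^sup>2 = ((1 - x\<^sup>2)\<^sup>2 + (2*x)\<^sup>2)/(1 + x\<^sup>2)\<^sup>2"
    unfolding cayley_Re cayley_Im by (simp add: power_divide add_divide_distrib)
  also have "\<dots> = 1" using e d by simp
  finally show ?thesis by (simp add: cmod_def)
qed

lemma cayley_cont: "continuous_on UNIV cayley"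
proof -
  have d: "\<And>x::real. 1 + x\<^sup>2 \<noteq> 0" by (metis add_pos_nonneg zero_less_one zero_le_power2 less_irrefl)
  show ?thesis unfolding cayley_eq[abs_def] using d
    by (intro continuous_intros) auto
qed

lemma inv_lim: "((\<lambda>d::real. inverse d) \<longlongrightarrow> 0) at_top"
  by (rule tendsto_inverse_0_at_top[OF filterlim_ident])

lemma cayley_lim: "(cayley \<longlongrightarrow> -1) at_top"
proof -
  have "((\<lambda>x::real. Complex (((inverse x)\<^sup>2 - 1)/((inverse x)\<^sup>2 + 1)) (2 * inverse x/((inverse x)\<^sup>2 + 1))) \<longlongrightarrow> Complex ((0\<^sup>2 - 1)/(0\<^sup>2 + 1)) (2 * 0/(0\<^sup>2 + 1))) at_top"
    by (intro tendsto_intros inv_lim) auto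
  moreover have "Complex ((0\<^sup>2 - 1)/(0\<^sup>2 + 1)) (2 * 0/(0\<^sup>2 + 1)) = (-1::complex)" by (simp add: complex_eq_iff)
  ultimately have l: "((\<lambda>x::real. Complex (((inverse x)\<^sup>2 - 1)/((inverse x)\<^sup>2 + 1)) (2 * inverse x/((inverse x)\<^sup>2 + 1))) \<longlongrightarrow> -1) at_top"
    by simp
  have "eventually (\<lambda>x::real. Complex (((inverse x)\<^sup>2 - 1)/((inverse x)\<^sup>2 + 1)) (2 * inverse x/((inverse x)\<^sup>2 + 1)) = cayley x) at_top"
    using eventually_gt_at_top[of 0]
  proof eventually_elim
    case (elim x)
    then have x0: "x \<noteq> 0" by simp
    have d1: "1 + x\<^sup>2 \<noteq> 0" by (metis add_pos_nonneg zero_less_one zero_le_power2 less_irrefl)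
    have ix: "(inverse x)\<^sup>2 * x\<^sup>2 = 1" using x0 by (simp add: power_inverse)
    have e1: "((inverse x)\<^sup>2 - 1)/((inverse x)\<^sup>2 + 1) = (1 - x\<^sup>2)/(1 + x\<^sup>2)"
    proof -
      have "((inverse x)\<^sup>2 - 1) * x\<^sup>2 = 1 - x\<^sup>2" using ix by (simp add: algebra_simps)
      moreover have "((inverse x)\<^sup>2 + 1) * x\<^sup>2 = 1 + x\<^sup>2" using ix by (simp add: algebra_simps)
      ultimately show ?thesis using x0 by (metis mult_divide_mult_cancel_right power_not_zero)
    qed
    have e2: "2 * inverse x/((inverse x)\<^sup>2 + 1) = 2*x/(1 + x\<^sup>2)"
    proof -
      have "(2 * inverse x) * x\<^sup>2 = 2 * x" using x0 by (simp add: power2_eq_square)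
      moreover have "((inverse x)\<^sup>2 + 1) * x\<^sup>2 = 1 + x\<^sup>2" using ix by (simp add: algebra_simps)
      ultimately show ?thesis using x0 by (metis mult_divide_mult_cancel_right power_not_zero)
    qed
    show ?case unfolding cayley_eq e1 e2 ..
  qed
  from tendsto_cong[OF this] l show ?thesis by simp
qed

lemma cayley_inv:
  assumes "z \<in> sphere 0 1" "z \<noteq> -1"
  shows "cayley (Im z / (1 + Re z)) = z"
proof -
  have n: "(Re z)\<^sup>2 + (Im z)\<^sup>2 = 1" using assms(1) by (simp add: cmod_def)
  have "Re z \<noteq> -1"
  proof
    assume "Re z = -1" then have "Im z = 0" using n by simp
    with \<open>Re z = -1\<close> assms(2) show False by (simp add: complex_eq_iff)
  qed
  moreover have "Re z \<ge> -1" using abs_Re_le_cmod[of z] assms(1) by simp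
  ultimately have p: "1 + Re z > 0" by simp
  have y2: "(Im z)\<^sup>2 = 1 - (Re z)\<^sup>2" using n by simp
  define v where "v = Im z / (1 + Re z)"
  have v2: "v\<^sup>2 = (1 - Re z)/(1 + Re z)"
  proof -
    have "v\<^sup>2 = (1 - (Re z)\<^sup>2) / (1 + Re z)\<^sup>2" unfolding v_def by (simp add: power_divide y2)
    also have "1 - (Re z)\<^sup>2 = (1 - Re z) * (1 + Re z)" by (simp add: algebra_simps power2_eq_square)
    finally show ?thesis using p by (simp add: power2_eq_square)
  qed
  have a1: "1 + v\<^sup>2 = 2 / (1 + Re z)" using p unfolding v2 by (simp add: field_simps)
  have a2: "1 - v\<^sup>2 = 2 * Re z / (1 + Re z)" using p unfolding v2 by (simp add: field_simps)
  have "Re (cayley v) = Re z" unfolding cayley_Re a1 a2 using p by simp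
  moreover have "Im (cayley v) = Im z" unfolding cayley_Im a1 using p by (simp add: v_def)
  ultimately show ?thesis unfolding v_def by (simp add: complex_eq_iff)
qed



lemma aff_nonneg:
  assumes h: "\<forall>z\<in>sphere 0 1. 0 \<le> c + p * Re z + q * Im z" and e: "cmod \<eta> \<le> 1"
  shows "0 \<le> c + p * Re \<eta> + q * Im \<eta>"
proof (cases "p = 0 \<and> q = 0")
  case True
  have "(1::complex) \<in> sphere 0 1" by simp
  from h[rule_format, OF this] True show ?thesis by simp
next
  case False
  define g where "g = sqrt (p\<^sup>2 + q\<^sup>2)"
  have gp: "g > 0" using False unfolding g_def
    by (metis add_nonneg_pos add_pos_nonneg not_real_square_gt_zero real_sqrt_gt_0_iff zero_le_power2 power2_eq_square)
  define w where "w = Complex (- p / g) (- q / g)"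
  have g2: "g\<^sup>2 = p\<^sup>2 + q\<^sup>2" unfolding g_def by simp
  have "cmod w = 1" unfolding w_def cmod_def using gp g2 False
    by (simp add: power_divide add_divide_distrib[symmetric])
  then have "w \<in> sphere 0 1" by simp
  from h[rule_format, OF this] have "0 \<le> c - (p\<^sup>2 + q\<^sup>2) / g"
    unfolding w_def by (simp add: power2_eq_square diff_divide_distrib add_divide_distrib)
  moreover have "(p\<^sup>2 + q\<^sup>2) / g = g"
  proof -
    have "(p\<^sup>2 + q\<^sup>2) / g = g\<^sup>2 / g" by (simp only: g2)
    also have "\<dots> = g" using gp by (simp add: power2_eq_square)
    finally show ?thesis .
  qed
  ultimately have c1: "0 \<le> c - g" by simp
  have cs: "\<bar>inner (Complex p q) \<eta>\<bar> \<le> norm (Complex p q) * norm \<eta>" by (rule Cauchy_Schwarz_ineq2)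
  have "norm (Complex p q) = g" unfolding g_def cmod_def by simp
  moreover have "inner (Complex p q) \<eta> = p * Re \<eta> + q * Im \<eta>" by (simp add: inner_complex_def)
  moreover have "g * norm \<eta> \<le> g" using e gp by (intro mult_left_le) auto
  ultimately have "\<bar>p * Re \<eta> + q * Im \<eta>\<bar> \<le> g" using cs by simp
  with c1 show ?thesis by linarith
qed

lemma quad_cr:
  assumes "b \<noteq> a" "c \<noteq> b" "d \<noteq> c" "a \<noteq> d"
  shows "field_cr (\<lambda>x. A0 + A1 * x + A2 * x\<^sup>2) a b c d = 0"
proof -
  have k: "\<And>x y. x \<noteq> y \<Longrightarrow> ((A0 + A1 * y + A2 * y\<^sup>2) - (A0 + A1 * x + A2 * x\<^sup>2)) / (y - x) = A1 + A2 * (x + y)"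
  proof -
    fix x y :: real assume "x \<noteq> y"
    then have "y - x \<noteq> 0" by simp
    moreover have "(A0 + A1 * y + A2 * y\<^sup>2) - (A0 + A1 * x + A2 * x\<^sup>2) = (A1 + A2 * (x + y)) * (y - x)"
      by (simp add: algebra_simps power2_eq_square)
    ultimately show "((A0 + A1 * y + A2 * y\<^sup>2) - (A0 + A1 * x + A2 * x\<^sup>2)) / (y - x) = A1 + A2 * (x + y)"
      by simp
  qed
  show ?thesis unfolding field_cr_def
    using k[of a b] k[of b c] k[of c d] k[of d a] assms by (simp add: algebra_simps)
qed

lemma cr_distinct:
  assumes "cross_ratio a b c d = 1"
  shows "b \<noteq> a" "c \<noteq> b" "d \<noteq> c" "a \<noteq> d"
  using assms unfolding cross_ratio_def by auto

lemma outer_case: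
  fixes Y :: "real \<Rightarrow> real"
  assumes r: "r > 0" and N: "N \<ge> 0" and mu: "\<mu> \<ge> 0"
    and bnd: "\<forall>w. \<bar>Y w\<bar> \<le> \<mu> * ((w - s)\<^sup>2 + r\<^sup>2)"
    and eq: "\<bar>Y v\<bar> = \<mu> * ((v - s)\<^sup>2 + r\<^sup>2)"
    and z: "Y z = 0" "(z - s)\<^sup>2 = r\<^sup>2/4"
    and mid: "\<forall>a c. a \<noteq> c \<longrightarrow> \<bar>2 * Y ((a + c) / 2) - Y a - Y c\<bar> \<le> N * \<bar>c - a\<bar> / 2"
    and side: "(v - z) * (z - s) \<ge> 0"
  shows "2 * r * \<mu> \<le> N"
proof (cases "v = z")
  case True
  have "(v - s)\<^sup>2 + r\<^sup>2 > 0" using r by (simp add: add_nonneg_pos)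
  with eq z True r have "\<mu> = 0" by simp
  then show ?thesis using N by simp
next
  case False
  define w where "w = 2 * z - v"
  have "v \<noteq> w" using False unfolding w_def by simp
  from mid[rule_format, OF this] have "\<bar>2 * Y z - Y v - Y w\<bar> \<le> N * \<bar>w - v\<bar> / 2"
    unfolding w_def by simp
  moreover have "\<bar>w - v\<bar> = 2 * \<bar>v - z\<bar>"
  proof -
    have "w - v = 2 * (z - v)" unfolding w_def by simp
    then have "\<bar>w - v\<bar> = \<bar>2 * (z - v)\<bar>" by (simp only:)
    also have "\<dots> = 2 * \<bar>z - v\<bar>" by (simp only: abs_mult abs_numeral)
    also have "\<dots> = 2 * \<bar>v - z\<bar>" by (simp only: abs_minus_commute)
    finally show ?thesis .
  qed
  ultimately have "\<bar>2 * Y z - Y v - Y w\<bar> \<le> N * \<bar>v - z\<bar>" by simp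
  then have "\<bar>Y v\<bar> \<le> N * \<bar>v - z\<bar> + \<bar>Y w\<bar>" using z(1) by linarith
  moreover have "\<bar>Y w\<bar> \<le> \<mu> * ((w - s)\<^sup>2 + r\<^sup>2)" using bnd by blast
  ultimately have i1: "\<mu> * ((v - s)\<^sup>2 + r\<^sup>2) \<le> N * \<bar>v - z\<bar> + \<mu> * ((w - s)\<^sup>2 + r\<^sup>2)"
    using eq by linarith
  have e1: "(v - s)\<^sup>2 - (w - s)\<^sup>2 = 4 * ((v - z) * (z - s))" unfolding w_def by (simp add: algebra_simps power2_eq_square)
  have "(z - s)\<^sup>2 = (r/2)\<^sup>2" using z(2) by (simp add: power_divide)
  then have "z - s = r/2 \<or> z - s = -(r/2)" by (simp only: power2_eq_iff)
  then have zs: "\<bar>z - s\<bar> = r/2" using r by auto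
  have "(v - z) * (z - s) = \<bar>v - z\<bar> * \<bar>z - s\<bar>" using side by (metis abs_mult abs_of_nonneg)
  then have "4 * ((v - z) * (z - s)) = 2 * r * \<bar>v - z\<bar>" using zs by (simp add: algebra_simps)
  with e1 i1 have "\<mu> * (2 * r * \<bar>v - z\<bar>) \<le> N * \<bar>v - z\<bar>" by (simp add: algebra_simps)
  moreover have "\<bar>v - z\<bar> > 0" using False by simp
  ultimately have "\<mu> * (2 * r) \<le> N" by (metis mult.assoc mult.commute mult_le_cancel_right_pos)
  then show ?thesis by (simp add: mult.commute)
qed



lemma inner_case:
  fixes Y :: "real \<Rightarrow> real"
  assumes r: "r > 0" and N: "N \<ge> 0" and mu: "\<mu> \<ge> 0"
    and bnd: "\<forall>w. \<bar>Y w\<bar> \<le> \<mu> * ((w - s)\<^sup>2 + r\<^sup>2)"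
    and eq: "\<bar>Y v\<bar> = \<mu> * ((v - s)\<^sup>2 + r\<^sup>2)"
    and z: "Y z = 0" "(z - s)\<^sup>2 = r\<^sup>2/4"
    and mid: "\<forall>a c. a \<noteq> c \<longrightarrow> \<bar>2 * Y ((a + c) / 2) - Y a - Y c\<bar> \<le> N * \<bar>c - a\<bar> / 2"
    and close: "\<bar>v - z\<bar> \<le> r/2"
  shows "3 * r * \<mu> \<le> 2 * N"
proof (cases "v = z")
  case True
  have "(v - s)\<^sup>2 + r\<^sup>2 > 0" using r by (simp add: add_nonneg_pos)
  with eq z True r have "\<mu> = 0" by simp
  then show ?thesis using N by simp
next
  case False
  define w where "w = 2 * v - z"
  define \<delta> where "\<delta> = \<bar>v - z\<bar>"
  have dp: "\<delta> > 0" using False unfolding \<delta>_def by simp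
  have "z \<noteq> w" using False unfolding w_def by simp
  from mid[rule_format, OF this] have "\<bar>2 * Y ((z + w) / 2) - Y z - Y w\<bar> \<le> N * \<bar>w - z\<bar> / 2" .
  moreover have "(z + w) / 2 = v" unfolding w_def by simp
  moreover have "\<bar>w - z\<bar> = 2 * \<delta>"
  proof -
    have "w - z = 2 * (v - z)" unfolding w_def by simp
    then have "\<bar>w - z\<bar> = \<bar>2 * (v - z)\<bar>" by (simp only:)
    also have "\<dots> = 2 * \<delta>" unfolding \<delta>_def by (simp only: abs_mult abs_numeral)
    finally show ?thesis .
  qed
  ultimately have "\<bar>2 * Y v - Y z - Y w\<bar> \<le> N * \<delta>" by simp
  then have "2 * \<bar>Y v\<bar> \<le> N * \<delta> + \<bar>Y w\<bar>" using z(1) by linarith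
  moreover have "\<bar>Y w\<bar> \<le> \<mu> * ((w - s)\<^sup>2 + r\<^sup>2)" using bnd by blast
  ultimately have i1: "2 * (\<mu> * ((v - s)\<^sup>2 + r\<^sup>2)) \<le> N * \<delta> + \<mu> * ((w - s)\<^sup>2 + r\<^sup>2)"
    using eq by linarith
  have e1: "2 * ((v - s)\<^sup>2 + r\<^sup>2) - ((w - s)\<^sup>2 + r\<^sup>2) = (z - s)\<^sup>2 + r\<^sup>2 - 2 * (v - z)\<^sup>2"
    unfolding w_def by (simp add: algebra_simps power2_eq_square)
  have d2: "(v - z)\<^sup>2 = \<delta>\<^sup>2" unfolding \<delta>_def by simp
  define P where "P = 5/4 * r\<^sup>2 - 2 * \<delta>\<^sup>2"
  have br: "2 * ((v - s)\<^sup>2 + r\<^sup>2) - ((w - s)\<^sup>2 + r\<^sup>2) = P"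
    using e1 z(2) d2 unfolding P_def by linarith
  have "2 * (\<mu> * ((v - s)\<^sup>2 + r\<^sup>2)) - \<mu> * ((w - s)\<^sup>2 + r\<^sup>2) = \<mu> * (2 * ((v - s)\<^sup>2 + r\<^sup>2) - ((w - s)\<^sup>2 + r\<^sup>2))"
    by (simp add: algebra_simps)
  then have "2 * (\<mu> * ((v - s)\<^sup>2 + r\<^sup>2)) - \<mu> * ((w - s)\<^sup>2 + r\<^sup>2) = \<mu> * P" using br by simp
  with i1 have i2: "\<mu> * P \<le> N * \<delta>" by linarith
  have dr: "2 * \<delta> \<le> r" using close unfolding \<delta>_def by simp
  have "\<delta>\<^sup>2 \<le> (r/2)\<^sup>2" using dr dp by (intro power_mono) auto
  then have h1: "\<delta>\<^sup>2 \<le> r\<^sup>2 / 4" by (simp add: power_divide)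
  have h2: "r\<^sup>2 > 0" using r by simp
  have Ppos: "P > 0" unfolding P_def using h1 h2 by linarith
  have "(2 * \<delta> - r) * (2 * \<delta> + 5/2 * r) \<le> 0"
    using dr dp r by (intro mult_nonpos_nonneg) auto
  moreover have "(2 * \<delta> - r) * (2 * \<delta> + 5/2 * r) = 4 * (\<delta> * \<delta>) + 3 * (r * \<delta>) - 5/2 * (r * r)" by algebra
  moreover have "P = 5/4 * (r * r) - 2 * (\<delta> * \<delta>)" unfolding P_def by (simp add: power2_eq_square)
  moreover have "3 * r * \<delta> = 3 * (r * \<delta>)" by simp
  ultimately have q: "3 * r * \<delta> \<le> 2 * P" by linarith
  have "(3 * r * \<mu>) * P \<le> 3 * r * (N * \<delta>)" using i2 r
    by (metis mult.assoc mult_le_cancel_left_pos zero_less_numeral mult_pos_pos)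
  also have "\<dots> = N * (3 * r * \<delta>)" by simp
  also have "\<dots> \<le> N * (2 * P)" using q N by (rule mult_left_mono)
  finally have "(3 * r * \<mu>) * P \<le> (2 * N) * P" by simp
  with Ppos show ?thesis by simp
qed

lemma maxprinciple_arith:
  fixes Y :: "real \<Rightarrow> real"
  assumes r: "r > 0" and N: "N \<ge> 0" and mu: "\<mu> \<ge> 0"
    and bnd: "\<forall>w. \<bar>Y w\<bar> \<le> \<mu> * ((w - s)\<^sup>2 + r\<^sup>2)"
    and eq: "\<bar>Y v\<bar> = \<mu> * ((v - s)\<^sup>2 + r\<^sup>2)"
    and z1: "Y (s - r/2) = 0" and z2: "Y (s + r/2) = 0"
    and mid: "\<forall>a c. a \<noteq> c \<longrightarrow> \<bar>2 * Y ((a + c) / 2) - Y a - Y c\<bar> \<le> N * \<bar>c - a\<bar> / 2"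
  shows "3 * r * \<mu> \<le> 2 * N"
proof -
  have s1: "((s - r/2) - s)\<^sup>2 = r\<^sup>2/4" by (simp add: power2_eq_square)
  have s2: "((s + r/2) - s)\<^sup>2 = r\<^sup>2/4" by (simp add: power2_eq_square)
  consider "v \<ge> s + r/2" | "s \<le> v" "v < s + r/2" | "s - r/2 < v" "v < s" | "v \<le> s - r/2" by linarith
  then show ?thesis
  proof cases
    case 1
    have "(v - (s + r/2)) * ((s + r/2) - s) \<ge> 0" using 1 r by simp
    from outer_case[OF r N mu bnd eq z2 s2 mid this] show ?thesis using N r mu by linarith
  next
    case 2
    have "\<bar>v - (s + r/2)\<bar> \<le> r/2" using 2 by simp
    from inner_case[OF r N mu bnd eq z2 s2 mid this] show ?thesis .
  next
    case 3
    have "\<bar>v - (s - r/2)\<bar> \<le> r/2" using 3 by simp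
    from inner_case[OF r N mu bnd eq z1 s1 mid this] show ?thesis .
  next
    case 4
    have "(v - (s - r/2)) * ((s - r/2) - s) \<ge> 0" using 4 r by (intro mult_nonpos_nonpos) auto
    from outer_case[OF r N mu bnd eq z1 s1 mid this] show ?thesis using N r mu by linarith
  qed
qed



lemma t2_aux:
  fixes p q r x y :: real
  assumes "x \<noteq> 0" "y \<noteq> 0"
  shows "(p - q)/x - (r - p)/(-y) = p*(y - x)/(x*y) - q/x + r/y"
  using assms by (simp add: field_simps)

lemma midpoint_bound:
  fixes Y :: "real \<Rightarrow> real"
  assumes crb: "\<forall>a b c d. cross_ratio a b c d = 1 \<longrightarrow> \<bar>field_cr Y a b c d\<bar> \<le> N"
    and cont: "continuous_on UNIV Y"
    and dec: "((\<lambda>d. Y d / (1 + d\<^sup>2)) \<longlongrightarrow> 0) at_top"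
    and ac: "a \<noteq> c"
  shows "\<bar>2 * Y ((a + c) / 2) - Y a - Y c\<bar> \<le> N * \<bar>c - a\<bar> / 2"
proof -
  define m where "m = (a + c) / 2"
  define bf where "bf = (\<lambda>d::real. ((a + c) * d - 2 * a * c) / (2 * d - a - c))"
  define T1 where "T1 = (\<lambda>d. (Y (bf d) - Y a) / (bf d - a) - (Y c - Y (bf d)) / (c - bf d))"
  define T2 where "T2 = (\<lambda>d. (Y d - Y c) / (d - c) - (Y a - Y d) / (a - d))"
  have ev: "eventually (\<lambda>d. d > \<bar>a\<bar> + \<bar>c\<bar> + 1) at_top" by (rule eventually_gt_at_top)
  have good: "d > 0 \<and> d \<noteq> a \<and> d \<noteq> c \<and> 2 * d - a - c > 0" if "d > \<bar>a\<bar> + \<bar>c\<bar> + 1" for d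
    using that by (auto simp: abs_if split: if_splits)
  have crd: "cross_ratio a (bf d) c d = 1" if "d > \<bar>a\<bar> + \<bar>c\<bar> + 1" for d
  proof -
    from good[OF that] have g: "d \<noteq> a" "d \<noteq> c" "2 * d - a - c \<noteq> 0" by auto
    define D where "D = 2 * d - a - c"
    have Dn: "D \<noteq> 0" using g unfolding D_def by simp
    have bD: "bf d * D = (a + c) * d - 2 * a * c" unfolding bf_def D_def using g by simp
    have h1: "(bf d - a) * D = (c - a) * (d - a)" using bD unfolding D_def by (simp add: algebra_simps)
    have h2: "(c - bf d) * D = (c - a) * (d - c)" using bD unfolding D_def by (simp add: algebra_simps)
    have n1: "bf d - a = (c - a) * (d - a) / D" using h1 Dn by (simp add: eq_divide_eq)
    have n2: "c - bf d = (c - a) * (d - c) / D" using h2 Dn by (simp add: eq_divide_eq)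
    have "(c - bf d) * (d - a) \<noteq> 0" unfolding n2 using g ac Dn by simp
    moreover have "(bf d - a) * (d - c) = (c - bf d) * (d - a)" unfolding n1 n2 by simp
    ultimately show ?thesis unfolding cross_ratio_def by simp
  qed
  have bnd: "eventually (\<lambda>d. \<bar>T1 d + T2 d\<bar> \<le> N) at_top"
    using ev
  proof eventually_elim
    case (elim d)
    have "field_cr Y a (bf d) c d = T1 d + T2 d" unfolding field_cr_def T1_def T2_def by simp
    with crb crd[OF elim] show ?case by metis
  qed
  have bflim: "(bf \<longlongrightarrow> m) at_top"
  proof -
    have "((\<lambda>d. ((a + c) - 2 * a * c * inverse d) / (2 - (a + c) * inverse d)) \<longlongrightarrow> ((a + c) - 2 * a * c * 0) / (2 - (a + c) * 0)) at_top"
      by (intro tendsto_intros inv_lim) auto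
    then have l: "((\<lambda>d. ((a + c) - 2 * a * c * inverse d) / (2 - (a + c) * inverse d)) \<longlongrightarrow> m) at_top"
      unfolding m_def by simp
    have "eventually (\<lambda>d. ((a + c) - 2 * a * c * inverse d) / (2 - (a + c) * inverse d) = bf d) at_top"
      using ev
    proof eventually_elim
      case (elim d)
      from good[OF elim] have d0: "d \<noteq> 0" by auto
      have "((a + c) - 2 * a * c * inverse d) * d = (a + c) * d - 2 * a * c" using d0 by (simp add: algebra_simps)
      moreover have "(2 - (a + c) * inverse d) * d = 2 * d - a - c" using d0 by (simp add: algebra_simps)
      ultimately show ?case unfolding bf_def using d0 by (metis mult_divide_mult_cancel_right)
    qed
    from tendsto_cong[OF this] l show ?thesis by simp
  qed
  have ma: "m - a \<noteq> 0" "c - m \<noteq> 0" using ac unfolding m_def by auto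
  have Ycont: "isCont Y x" for x using cont by (simp add: continuous_on_eq_continuous_at)
  have Ybf: "((\<lambda>d. Y (bf d)) \<longlongrightarrow> Y m) at_top"
    using isCont_tendsto_compose[OF Ycont bflim] .
  have T1lim: "(T1 \<longlongrightarrow> (Y m - Y a) / (m - a) - (Y c - Y m) / (c - m)) at_top"
    unfolding T1_def using ma by (intro tendsto_intros Ybf bflim) auto
  have T2lim: "(T2 \<longlongrightarrow> 0) at_top"
  proof -
    have "((\<lambda>d. (Y d / (1 + d\<^sup>2)) * (((inverse d)\<^sup>2 + 1) * (c - a) / ((1 - c * inverse d) * (1 - a * inverse d)))
            - Y c * inverse d / (1 - c * inverse d) + Y a * inverse d / (1 - a * inverse d))
          \<longlongrightarrow> 0 * ((0\<^sup>2 + 1) * (c - a) / ((1 - c * 0) * (1 - a * 0))) - Y c * 0 / (1 - c * 0) + Y a * 0 / (1 - a * 0)) at_top"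
      by (intro tendsto_intros inv_lim dec) auto
    then have l: "((\<lambda>d. (Y d / (1 + d\<^sup>2)) * (((inverse d)\<^sup>2 + 1) * (c - a) / ((1 - c * inverse d) * (1 - a * inverse d)))
            - Y c * inverse d / (1 - c * inverse d) + Y a * inverse d / (1 - a * inverse d)) \<longlongrightarrow> 0) at_top"
      by simp
    have "eventually (\<lambda>d. (Y d / (1 + d\<^sup>2)) * (((inverse d)\<^sup>2 + 1) * (c - a) / ((1 - c * inverse d) * (1 - a * inverse d)))
            - Y c * inverse d / (1 - c * inverse d) + Y a * inverse d / (1 - a * inverse d) = T2 d) at_top"
      using ev
    proof eventually_elim
      case (elim d)
      from good[OF elim] have d0: "d \<noteq> 0" and da: "d - a \<noteq> 0" and dc: "d - c \<noteq> 0" by auto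
      have q0: "1 + d\<^sup>2 \<noteq> 0" by (metis add_pos_nonneg zero_less_one zero_le_power2 less_irrefl)
      have e1: "((inverse d)\<^sup>2 + 1) * (c - a) / ((1 - c * inverse d) * (1 - a * inverse d)) = (1 + d\<^sup>2) * (c - a) / ((d - c) * (d - a))"
      proof -
        have "(((inverse d)\<^sup>2 + 1) * (c - a)) * d\<^sup>2 = (1 + d\<^sup>2) * (c - a)" using d0
          by (simp add: algebra_simps power2_eq_square)
        moreover have "((1 - c * inverse d) * (1 - a * inverse d)) * d\<^sup>2 = (d - c) * (d - a)" using d0
          by (simp add: algebra_simps power2_eq_square)
        ultimately show ?thesis using d0 by (metis mult_divide_mult_cancel_right power_not_zero)
      qed
      have e2: "Y c * inverse d / (1 - c * inverse d) = Y c / (d - c)"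
      proof -
        have "(Y c * inverse d) * d = Y c" using d0 by simp
        moreover have "(1 - c * inverse d) * d = d - c" using d0 by (simp add: algebra_simps)
        ultimately show ?thesis using d0 by (metis mult_divide_mult_cancel_right)
      qed
      have e3: "Y a * inverse d / (1 - a * inverse d) = Y a / (d - a)"
      proof -
        have "(Y a * inverse d) * d = Y a" using d0 by simp
        moreover have "(1 - a * inverse d) * d = d - a" using d0 by (simp add: algebra_simps)
        ultimately show ?thesis using d0 by (metis mult_divide_mult_cancel_right)
      qed
      have e4: "(Y d / (1 + d\<^sup>2)) * ((1 + d\<^sup>2) * (c - a) / ((d - c) * (d - a))) = Y d * (c - a) / ((d - c) * (d - a))"
        using q0 by simp
      have e5: "T2 d = Y d * (c - a) / ((d - c) * (d - a)) - Y c / (d - c) + Y a / (d - a)"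
      proof -
        have "T2 d = (Y d - Y c)/(d - c) - (Y a - Y d)/(-(d - a))" unfolding T2_def by simp
        also have "\<dots> = Y d*((d - a) - (d - c))/((d - c)*(d - a)) - Y c/(d - c) + Y a/(d - a)"
          by (rule t2_aux[OF dc da])
        also have "(d - a) - (d - c) = c - a" by simp
        finally show ?thesis .
      qed
      show ?case unfolding e1 e2 e3 e4 e5 ..
    qed
    from tendsto_cong[OF this] l show ?thesis by simp
  qed
  have L: "((\<lambda>d. \<bar>T1 d + T2 d\<bar>) \<longlongrightarrow> \<bar>(Y m - Y a) / (m - a) - (Y c - Y m) / (c - m) + 0\<bar>) at_top"
    by (intro tendsto_intros T1lim T2lim)
  have "\<bar>(Y m - Y a) / (m - a) - (Y c - Y m) / (c - m) + 0\<bar> \<le> N"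
    using tendsto_upperbound[OF L bnd] by simp
  moreover have "m - a = (c - a) / 2" "c - m = (c - a) / 2" unfolding m_def by (auto simp: field_simps)
  then have "(Y m - Y a) / (m - a) - (Y c - Y m) / (c - m) + 0 = ((Y m - Y a) - (Y c - Y m)) / ((c - a) / 2)"
    by (simp only: add_0_right diff_divide_distrib)
  moreover have "(Y m - Y a) - (Y c - Y m) = 2 * Y m - Y a - Y c" by simp
  ultimately have "\<bar>(2 * Y m - Y a - Y c) / ((c - a) / 2)\<bar> \<le> N"
    by simp
  then have "\<bar>2 * Y m - Y a - Y c\<bar> / (\<bar>c - a\<bar> / 2) \<le> N" by (simp only: abs_divide abs_numeral)
  moreover have "\<bar>c - a\<bar> / 2 > 0" using ac by simp
  ultimately show ?thesis unfolding m_def by (simp add: divide_le_eq mult.commute)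
qed



lemma plus_le:
  assumes up: "\<forall>z\<in>sphere 0 1. \<phi> z \<le> c0 + p0 * Re z + q0 * Im z"
    and lo: "\<forall>z\<in>sphere 0 1. c1 + p1 * Re z + q1 * Im z \<le> \<phi> z"
    and e: "cmod \<eta> \<le> 1"
  shows "phi_plus \<phi> \<eta> \<le> c0 + p0 * Re \<eta> + q0 * Im \<eta>"
proof -
  define S where "S = {c + p * Re \<eta> + q * Im \<eta> | c p q.
      \<forall>z\<in>sphere 0 1. c + p * Re z + q * Im z \<ge> \<phi> z}"
  have mem: "c0 + p0 * Re \<eta> + q0 * Im \<eta> \<in> S" unfolding S_def using up by blast
  have "bdd_below S"
  proof (rule bdd_belowI)
    fix y assume "y \<in> S"
    then obtain c p q where y: "y = c + p * Re \<eta> + q * Im \<eta>"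
      and h: "\<forall>z\<in>sphere 0 1. c + p * Re z + q * Im z \<ge> \<phi> z" unfolding S_def by blast
    have "\<forall>z\<in>sphere 0 1. 0 \<le> (c - c1) + (p - p1) * Re z + (q - q1) * Im z"
    proof
      fix z :: complex assume "z \<in> sphere 0 1"
      with h lo have "c1 + p1 * Re z + q1 * Im z \<le> c + p * Re z + q * Im z" by force
      then show "0 \<le> (c - c1) + (p - p1) * Re z + (q - q1) * Im z" by (simp add: algebra_simps)
    qed
    from aff_nonneg[OF this e] have "0 \<le> (c - c1) + (p - p1) * Re \<eta> + (q - q1) * Im \<eta>" .
    then show "c1 + p1 * Re \<eta> + q1 * Im \<eta> \<le> y" unfolding y by (simp add: algebra_simps)
  qed
  from cInf_lower[OF mem this] show ?thesis unfolding phi_plus_def S_def .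
qed

lemma minus_ge:
  assumes up: "\<forall>z\<in>sphere 0 1. \<phi> z \<le> c0 + p0 * Re z + q0 * Im z"
    and lo: "\<forall>z\<in>sphere 0 1. c1 + p1 * Re z + q1 * Im z \<le> \<phi> z"
    and e: "cmod \<eta> \<le> 1"
  shows "c1 + p1 * Re \<eta> + q1 * Im \<eta> \<le> phi_minus \<phi> \<eta>"
proof -
  define S where "S = {c + p * Re \<eta> + q * Im \<eta> | c p q.
      \<forall>z\<in>sphere 0 1. c + p * Re z + q * Im z \<le> \<phi> z}"
  have mem: "c1 + p1 * Re \<eta> + q1 * Im \<eta> \<in> S" unfolding S_def using lo by blast
  have "bdd_above S"
  proof (rule bdd_aboveI)
    fix y assume "y \<in> S"
    then obtain c p q where y: "y = c + p * Re \<eta> + q * Im \<eta>"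
      and h: "\<forall>z\<in>sphere 0 1. c + p * Re z + q * Im z \<le> \<phi> z" unfolding S_def by blast
    have "\<forall>z\<in>sphere 0 1. 0 \<le> (c0 - c) + (p0 - p) * Re z + (q0 - q) * Im z"
    proof
      fix z :: complex assume "z \<in> sphere 0 1"
      with h up have "c + p * Re z + q * Im z \<le> c0 + p0 * Re z + q0 * Im z" by force
      then show "0 \<le> (c0 - c) + (p0 - p) * Re z + (q0 - q) * Im z" by (simp add: algebra_simps)
    qed
    from aff_nonneg[OF this e] have "0 \<le> (c0 - c) + (p0 - p) * Re \<eta> + (q0 - q) * Im \<eta>" .
    then show "y \<le> c0 + p0 * Re \<eta> + q0 * Im \<eta>" unfolding y by (simp add: algebra_simps)
  qed
  from cSup_upper[OF mem this] show ?thesis unfolding phi_minus_def S_def .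
qed

lemma frac3:
  fixes P Q R S T D :: real
  assumes "D \<noteq> 0"
  shows "P + Q * (R / D) + S * (T / D) = (P * D + Q * R + S * T) / D"
  using assms by (simp add: field_simps)



lemma cayley_norm [simp]: "cmod (cayley x) = 1"
  using cayley_sphere[of x] by simp

lemma key:
  fixes \<phi> :: "complex \<Rightarrow> real"
  assumes cont\<phi>: "continuous_on (sphere 0 1) \<phi>" and N0: "N \<ge> 0"
    and Nb: "\<forall>a b c d. cross_ratio a b c d = 1 \<longrightarrow> \<bar>field_cr (chart_field \<phi>) a b c d\<bar> \<le> N"
    and eta: "\<eta> \<in> ball 0 1"
  shows "(phi_plus \<phi> \<eta> - phi_minus \<phi> \<eta>) / sqrt (1 - (cmod \<eta>)\<^sup>2) \<le> 8/3 * N"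
proof -
  define u where "u = Re \<eta>"
  define v where "v = Im \<eta>"
  define k where "k = sqrt (1 - (cmod \<eta>)\<^sup>2)"
  have n1: "cmod \<eta> < 1" using eta by simp
  have n2: "(cmod \<eta>)\<^sup>2 < 1" using n1 by (simp add: power_less_one_iff abs_less_iff)
  have k2: "k\<^sup>2 = 1 - (cmod \<eta>)\<^sup>2" unfolding k_def using n2 by simp
  have kp: "k > 0" unfolding k_def using n2 by simp
  have cm2: "(cmod \<eta>)\<^sup>2 = u\<^sup>2 + v\<^sup>2" unfolding u_def v_def by (simp add: cmod_power2)
  have "\<bar>u\<bar> < 1" using abs_Re_le_cmod[of \<eta>] n1 unfolding u_def by simp
  then have up: "1 + u > 0" by simp
  define s where "s = v / (1 + u)"
  define r where "r = k / (1 + u)"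
  have rp: "r > 0" unfolding r_def using kp up by simp
  have us: "(1 + u) * s = v" unfolding s_def using up by simp
  have ur: "(1 + u) * r = k" unfolding r_def using up by simp
  define X where "X = chart_field \<phi>"
  define x1 where "x1 = s - r/2"
  define x2 where "x2 = s + r/2"
  have x12: "x2 - x1 = r" unfolding x1_def x2_def by simp
  define A2 where "A2 = \<phi> (-1) / 2"
  define l1 where "l1 = (X x2 - X x1) / (x2 - x1)"
  define l0 where "l0 = X x1 - l1 * x1"
  define A0 where "A0 = l0 + A2 * x1 * x2"
  define A1 where "A1 = l1 - A2 * (x1 + x2)"
  define A where "A = (\<lambda>x. A0 + A1 * x + A2 * x\<^sup>2)"
  define af where "af = (\<lambda>z. (A0 + A2) + (A0 - A2) * Re z + A1 * Im z)"
  define \<psi> where "\<psi> = (\<lambda>z. \<phi> z - af z)"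
  define wt where "wt = (\<lambda>z. 1 - (u * Re z + v * Im z))"
  define Y where "Y = (\<lambda>x. X x - A x)"
  have Aalt: "A x = l0 + l1 * x + A2 * (x - x1) * (x - x2)" for x
    unfolding A_def A0_def A1_def by (simp add: algebra_simps power2_eq_square)
  have Ax1: "A x1 = X x1" unfolding Aalt l0_def by simp
  have Ax2: "A x2 = X x2"
  proof -
    have "l1 * (x2 - x1) = X x2 - X x1" unfolding l1_def using x12 rp by simp
    then show ?thesis unfolding Aalt l0_def by (simp add: algebra_simps)
  qed
  have Yx1: "Y (s - r/2) = 0" using Ax1 unfolding Y_def x1_def by simp
  have Yx2: "Y (s + r/2) = 0" using Ax2 unfolding Y_def x2_def by simp
  have d1: "1 + x\<^sup>2 \<noteq> 0" for x :: real by (metis add_pos_nonneg zero_less_one zero_le_power2 less_irrefl)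
  have afc: "af (cayley x) = 2 * A x / (1 + x\<^sup>2)" for x
  proof -
    have "af (cayley x) = (A0 + A2) + (A0 - A2) * ((1 - x\<^sup>2) / (1 + x\<^sup>2)) + A1 * (2 * x / (1 + x\<^sup>2))"
      unfolding af_def cayley_Re cayley_Im ..
    also have "\<dots> = ((A0 + A2) * (1 + x\<^sup>2) + (A0 - A2) * (1 - x\<^sup>2) + A1 * (2 * x)) / (1 + x\<^sup>2)"
      by (rule frac3[OF d1])
    also have "(A0 + A2) * (1 + x\<^sup>2) + (A0 - A2) * (1 - x\<^sup>2) + A1 * (2 * x) = 2 * A x"
      unfolding A_def by (simp add: algebra_simps)
    finally show ?thesis .
  qed
  have Yform: "Y x = (1 + x\<^sup>2) / 2 * \<psi> (cayley x)" for x
  proof -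
    have "(1 + x\<^sup>2) / 2 * af (cayley x) = A x" unfolding afc using d1[of x] by simp
    then show ?thesis unfolding Y_def \<psi>_def X_def chart_field_def by (simp add: algebra_simps)
  qed
  have \<psi>m1: "\<psi> (-1) = 0" unfolding \<psi>_def af_def A2_def by simp
  have \<psi>cont: "continuous_on (sphere 0 1) \<psi>"
    unfolding \<psi>_def af_def by (intro continuous_intros cont\<phi>)
  have Ycr: "\<forall>a b c d. cross_ratio a b c d = 1 \<longrightarrow> \<bar>field_cr Y a b c d\<bar> \<le> N"
  proof (intro allI impI)
    fix a b c d assume h: "cross_ratio a b c d = 1"
    note ds = cr_distinct[OF h]
    have "field_cr Y a b c d = field_cr X a b c d - field_cr A a b c d"
      unfolding field_cr_def Y_def by (simp add: diff_divide_distrib)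
    moreover have "field_cr A a b c d = 0" unfolding A_def by (rule quad_cr[OF ds])
    ultimately show "\<bar>field_cr Y a b c d\<bar> \<le> N" using Nb h unfolding X_def by simp
  qed
  have Xcont: "continuous_on UNIV X"
  proof -
    have "continuous_on UNIV (\<lambda>x. \<phi> (cayley x))"
      by (rule continuous_on_compose2[OF cont\<phi> cayley_cont]) (auto simp: cayley_sphere)
    then show ?thesis unfolding X_def chart_field_def using d1
      by (intro continuous_intros) auto
  qed
  have Ycont: "continuous_on UNIV Y" unfolding Y_def A_def by (intro continuous_intros Xcont)
  have Ydec: "((\<lambda>d. Y d / (1 + d\<^sup>2)) \<longlongrightarrow> 0) at_top"
  proof -
    have "((\<lambda>d. \<psi> (cayley d)) \<longlongrightarrow> \<psi> (-1)) at_top"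
      by (rule continuous_on_tendsto_compose[OF \<psi>cont cayley_lim]) (auto simp: cayley_sphere)
    then have "((\<lambda>d. \<psi> (cayley d) / 2) \<longlongrightarrow> \<psi> (-1) / 2) at_top"
      by (intro tendsto_divide tendsto_const) auto
    then have lim0: "((\<lambda>d. \<psi> (cayley d) / 2) \<longlongrightarrow> 0) at_top" using \<psi>m1 by simp
    have eqd: "Y d / (1 + d\<^sup>2) = \<psi> (cayley d) / 2" for d
    proof -
      have g: "\<And>D p::real. D \<noteq> 0 \<Longrightarrow> (D / 2 * p) / D = p / 2" by (simp add: field_simps)
      show ?thesis unfolding Yform by (rule g[OF d1])
    qed
    show ?thesis unfolding eqd by (rule lim0)
  qed
  have mid: "\<forall>a c. a \<noteq> c \<longrightarrow> \<bar>2 * Y ((a + c) / 2) - Y a - Y c\<bar> \<le> N * \<bar>c - a\<bar> / 2"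
    using midpoint_bound[OF Ycr Ycont Ydec] by blast
  have wtc: "wt (cayley x) = (1 + u) * ((x - s)\<^sup>2 + r\<^sup>2) / (1 + x\<^sup>2)" for x
  proof -
    have "wt (cayley x) = 1 + (- u) * ((1 - x\<^sup>2) / (1 + x\<^sup>2)) + (- v) * (2 * x / (1 + x\<^sup>2))"
      unfolding wt_def cayley_Re cayley_Im by simp
    also have "\<dots> = (1 * (1 + x\<^sup>2) + (- u) * (1 - x\<^sup>2) + (- v) * (2 * x)) / (1 + x\<^sup>2)"
      by (rule frac3[OF d1])
    also have "1 * (1 + x\<^sup>2) + (- u) * (1 - x\<^sup>2) + (- v) * (2 * x) = (1 + u) * ((x - s)\<^sup>2 + r\<^sup>2)"
    proof -
      have "(1 + u) * ((1 + u) * ((x - s)\<^sup>2 + r\<^sup>2)) = ((1 + u) * x)\<^sup>2 - 2 * x * (1 + u) * ((1 + u) * s) + ((1 + u) * s)\<^sup>2 + ((1 + u) * r)\<^sup>2"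
        by (simp add: algebra_simps power2_eq_square)
      also have "\<dots> = ((1 + u) * x)\<^sup>2 - 2 * x * (1 + u) * v + (v\<^sup>2 + k\<^sup>2)"
        unfolding us ur by simp
      also have "v\<^sup>2 + k\<^sup>2 = (1 - u) * (1 + u)" using k2 cm2 by (simp add: algebra_simps power2_eq_square)
      also have "((1 + u) * x)\<^sup>2 - 2 * x * (1 + u) * v + (1 - u) * (1 + u) = (1 + u) * (1 * (1 + x\<^sup>2) + (- u) * (1 - x\<^sup>2) + (- v) * (2 * x))"
        by (simp add: algebra_simps power2_eq_square)
      finally have "(1 + u) * ((1 + u) * ((x - s)\<^sup>2 + r\<^sup>2)) = (1 + u) * (1 * (1 + x\<^sup>2) + (- u) * (1 - x\<^sup>2) + (- v) * (2 * x))" .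
      then show ?thesis using up by simp
    qed
    finally show ?thesis .
  qed
  have wtpos: "wt z > 0" if "z \<in> sphere 0 1" for z
  proof -
    have "\<bar>inner \<eta> z\<bar> \<le> norm \<eta> * norm z" by (rule Cauchy_Schwarz_ineq2)
    moreover have "inner \<eta> z = u * Re z + v * Im z" unfolding u_def v_def by (simp add: inner_complex_def)
    moreover have "norm z = 1" using that by simp
    ultimately have "u * Re z + v * Im z < 1" using n1 by simp
    then show ?thesis unfolding wt_def by simp
  qed
  have wteta: "wt \<eta> = k\<^sup>2" unfolding wt_def k2 cm2 u_def v_def by (simp add: power2_eq_square)
  define H where "H = (\<lambda>z. \<bar>\<psi> z\<bar> / wt z)"
  have Hcont: "continuous_on (sphere 0 1) H"
  proof -
    have wtc: "continuous_on (sphere 0 1) wt" unfolding wt_def by (intro continuous_intros)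
    have ac: "continuous_on (sphere 0 1) (\<lambda>z. \<bar>\<psi> z\<bar>)" by (intro continuous_intros \<psi>cont)
    have "\<forall>z\<in>sphere 0 1. wt z \<noteq> 0" using wtpos by (metis less_irrefl)
    from continuous_on_divide[OF ac wtc this] show ?thesis unfolding H_def .
  qed
  have "(1::complex) \<in> sphere 0 1" by simp
  then have ne: "sphere (0::complex) 1 \<noteq> {}" by blast
  obtain z0 where z0: "z0 \<in> sphere 0 1" and z0max: "\<forall>z\<in>sphere 0 1. H z \<le> H z0"
    using continuous_attains_sup[OF compact_sphere ne Hcont] by blast
  define M where "M = H z0"
  have M0: "M \<ge> 0" unfolding M_def H_def using wtpos[OF z0] by simp
  have Hle: "\<bar>\<psi> z\<bar> \<le> M * wt z" if "z \<in> sphere 0 1" for z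
  proof -
    have "H z \<le> M" using z0max that unfolding M_def by blast
    then have "\<bar>\<psi> z\<bar> / wt z \<le> M" unfolding H_def .
    then show ?thesis using wtpos[OF that] by (simp add: divide_le_eq)
  qed
  have Mb: "M \<le> 4 * N / (3 * k)"
  proof (cases "z0 = -1")
    case True
    have "M = 0" unfolding M_def H_def True \<psi>m1 by simp
    then show ?thesis using N0 kp by simp
  next
    case False
    define v0 where "v0 = Im z0 / (1 + Re z0)"
    have cv: "cayley v0 = z0" unfolding v0_def by (rule cayley_inv[OF z0 False])
    define \<mu> where "\<mu> = M * (1 + u) / 2"
    have mu0: "\<mu> \<ge> 0" unfolding \<mu>_def using M0 up by simp
    have Yabs: "\<bar>Y w\<bar> = (1 + w\<^sup>2) / 2 * \<bar>\<psi> (cayley w)\<bar>" for w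
    proof -
      have "0 \<le> (1 + w\<^sup>2) / 2" by simp
      then show ?thesis unfolding Yform by (simp add: abs_mult)
    qed
    have W: "(1 + w\<^sup>2) / 2 * (M * wt (cayley w)) = \<mu> * ((w - s)\<^sup>2 + r\<^sup>2)" for w
    proof -
      have g2: "\<And>D M a Q::real. D \<noteq> 0 \<Longrightarrow> D / 2 * (M * (a * Q / D)) = M * a / 2 * Q" by (simp add: field_simps)
      show ?thesis unfolding wtc \<mu>_def by (rule g2[OF d1])
    qed
    have bndY: "\<forall>w. \<bar>Y w\<bar> \<le> \<mu> * ((w - s)\<^sup>2 + r\<^sup>2)"
    proof
      fix w
      have "\<bar>\<psi> (cayley w)\<bar> \<le> M * wt (cayley w)" using Hle cayley_sphere by blast
      then have "(1 + w\<^sup>2) / 2 * \<bar>\<psi> (cayley w)\<bar> \<le> (1 + w\<^sup>2) / 2 * (M * wt (cayley w))"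
        by (intro mult_left_mono) auto
      then show "\<bar>Y w\<bar> \<le> \<mu> * ((w - s)\<^sup>2 + r\<^sup>2)" unfolding Yabs W .
    qed
    have "\<bar>\<psi> z0\<bar> = M * wt z0" unfolding M_def H_def using wtpos[OF z0] by simp
    then have eqY: "\<bar>Y v0\<bar> = \<mu> * ((v0 - s)\<^sup>2 + r\<^sup>2)" unfolding Yabs W[symmetric] cv by simp
    from maxprinciple_arith[OF rp N0 mu0 bndY eqY Yx1 Yx2 mid] have "3 * r * \<mu> \<le> 2 * N" .
    moreover have "3 * r * \<mu> = 3 * k * M / 2" unfolding \<mu>_def ur[symmetric] by (simp add: algebra_simps)
    ultimately have "3 * k * M \<le> 4 * N" by simp
    then show ?thesis using kp by (simp add: le_divide_eq mult.commute)
  qed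
  define K where "K = 4 * N / (3 * k)"
  have \<psi>K: "\<bar>\<psi> z\<bar> \<le> K * wt z" if "z \<in> sphere 0 1" for z
  proof -
    have "M * wt z \<le> K * wt z" using Mb wtpos[OF that] unfolding K_def by (intro mult_right_mono) auto
    with Hle[OF that] show ?thesis by simp
  qed
  have upper: "\<forall>z\<in>sphere 0 1. \<phi> z \<le> (A0 + A2 + K) + ((A0 - A2) - K * u) * Re z + (A1 - K * v) * Im z"
  proof
    fix z :: complex assume z: "z \<in> sphere 0 1"
    have "(A0 + A2 + K) + ((A0 - A2) - K * u) * Re z + (A1 - K * v) * Im z = af z + K * wt z"
      unfolding af_def wt_def by (simp add: algebra_simps)
    moreover have "\<phi> z = af z + \<psi> z" unfolding \<psi>_def by simp
    ultimately show "\<phi> z \<le> (A0 + A2 + K) + ((A0 - A2) - K * u) * Re z + (A1 - K * v) * Im z"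
      using \<psi>K[OF z] by linarith
  qed
  have lower: "\<forall>z\<in>sphere 0 1. (A0 + A2 - K) + ((A0 - A2) + K * u) * Re z + (A1 + K * v) * Im z \<le> \<phi> z"
  proof
    fix z :: complex assume z: "z \<in> sphere 0 1"
    have "(A0 + A2 - K) + ((A0 - A2) + K * u) * Re z + (A1 + K * v) * Im z = af z - K * wt z"
      unfolding af_def wt_def by (simp add: algebra_simps)
    moreover have "\<phi> z = af z + \<psi> z" unfolding \<psi>_def by simp
    ultimately show "(A0 + A2 - K) + ((A0 - A2) + K * u) * Re z + (A1 + K * v) * Im z \<le> \<phi> z"
      using \<psi>K[OF z] by linarith
  qed
  have ce: "cmod \<eta> \<le> 1" using n1 by simp
  have pl: "phi_plus \<phi> \<eta> \<le> (A0 + A2 + K) + ((A0 - A2) - K * u) * Re \<eta> + (A1 - K * v) * Im \<eta>"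
    by (rule plus_le[OF upper lower ce])
  have mi: "(A0 + A2 - K) + ((A0 - A2) + K * u) * Re \<eta> + (A1 + K * v) * Im \<eta> \<le> phi_minus \<phi> \<eta>"
    by (rule minus_ge[OF upper lower ce])
  have "phi_plus \<phi> \<eta> - phi_minus \<phi> \<eta> \<le> 2 * K * wt \<eta>"
    using pl mi unfolding wt_def by (simp add: algebra_simps)
  also have "\<dots> = 8 / 3 * N * k" unfolding wteta K_def using kp by (simp add: power2_eq_square)
  finally have "(phi_plus \<phi> \<eta> - phi_minus \<phi> \<eta>) / k \<le> 8 / 3 * N" using kp by (simp add: divide_le_eq)
  then show ?thesis unfolding k_def .
qed


theorem proposition5p1:
  fixes \<phi> :: "complex \<Rightarrow> real"
  assumes "zygmund \<phi>"
  shows "width \<phi> \<le> ereal (8 / 3) * cr_norm \<phi>"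
proof -
  have cont\<phi>: "continuous_on (sphere 0 1) \<phi>" and fin: "cr_norm \<phi> < \<infinity>"
    using assms unfolding zygmund_def by auto
  have ub: "ereal \<bar>field_cr (chart_field \<phi>) a b c d\<bar> \<le> cr_norm \<phi>" if "cross_ratio a b c d = 1" for a b c d
    unfolding cr_norm_def by (rule SUP_upper2[of "(a, b, c, d)"]) (use that in auto)
  have "cross_ratio 0 (3/2) 2 3 = 1" by (simp add: cross_ratio_def)
  from ub[OF this] have "0 \<le> cr_norm \<phi>"
    by (metis abs_ge_zero ereal_less_eq(5) order_trans zero_ereal_def)
  then obtain N where N: "cr_norm \<phi> = ereal N" using fin by (cases "cr_norm \<phi>") auto
  have N0: "N \<ge> 0" using \<open>0 \<le> cr_norm \<phi>\<close> N by simp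
  have Nb: "\<forall>a b c d. cross_ratio a b c d = 1 \<longrightarrow> \<bar>field_cr (chart_field \<phi>) a b c d\<bar> \<le> N"
    using ub N by simp
  have "(SUP \<eta>\<in>ball 0 1. ereal ((phi_plus \<phi> \<eta> - phi_minus \<phi> \<eta>) / sqrt (1 - (cmod \<eta>)\<^sup>2))) \<le> ereal (8 / 3 * N)"
  proof (rule SUP_least)
    fix \<eta> :: complex assume "\<eta> \<in> ball 0 1"
    from key[OF cont\<phi> N0 Nb this] show "ereal ((phi_plus \<phi> \<eta> - phi_minus \<phi> \<eta>) / sqrt (1 - (cmod \<eta>)\<^sup>2)) \<le> ereal (8 / 3 * N)"
      by simp
  qed
  then show ?thesis unfolding width_def N by simp
qed

end
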